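(* Let $a,b$ be integers with $0<b<a$, let $S=\langle a,a+1,\ldots,a+b\rangle$ with conductor $c$, and let $m\ge 2c$. If $M$ is an $(S,m,r)$-amenable set, then $M-1=\{x-1\mid x\in M\}$ is an $(S,m-1,r)$-amenable set.
   Context: For $x\in S$, $\mathrm D(x)=\{\alpha\in S\mid x-\alpha\in S\}$. The conductor $c$ is the least element of $S$ with $c+n\in S$ for all $n\in\mathbb N$. For $m\ge 2c-1$, a set $M=\{m_1<\cdots<m_r\}\subseteq S$ with $m=m_1$ is $(S,m,r)$-amenable if $\mathrm D(m_i)\cap[m,\infty)\subseteq M$ for all $i$. *)

theory Defs
  imports Main
begin

definition sg_gen :: "nat set \<Rightarrow> nat set" where
  "sg_gen G = {x. \<exists>f::nat \<Rightarrow> nat. x = (\<Sum>g\<in>G. f g * g)}"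

definition conductor :: "nat set \<Rightarrow> nat" where
  "conductor S = (LEAST c. c \<in> S \<and> (\<forall>n. c + n \<in> S))"

text \<open>D(x) = {alpha in S | x - alpha in S}; subtraction is integer
  subtraction, so we require alpha \<le> x explicitly.\<close>
definition Dset :: "nat set \<Rightarrow> nat \<Rightarrow> nat set" where
  "Dset S x = {\<alpha> \<in> S. \<alpha> \<le> x \<and> x - \<alpha> \<in> S}"

text \<open>(S,m,r)-amenable set, including the standing requirement m \<ge> 2c-1.\<close>
definition amenable :: "nat set \<Rightarrow> nat \<Rightarrow> nat \<Rightarrow> nat set \<Rightarrow> bool" where
  "amenable S m r M \<longleftrightarrow>
     int m \<ge> 2 * int (conductor S) - 1 \<and>
     finite M \<and> card M = r \<and> M \<subseteq> S \<and> m \<in> M \<and> (\<forall>x\<in>M. m \<le> x) \<and>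
     (\<forall>x\<in>M. Dset S x \<inter> {m..} \<subseteq> M)"

end

theory Submission
  imports Defs
begin

lemma big_in_S:
  fixes a b n :: nat
  assumes "0 < b" "1 < a" "n \<ge> a * a"
  shows "n \<in> sg_gen {a..a+b}"
proof -
  define q where "q = n div a"
  define r where "r = n mod a"
  have n: "n = q * a + r" unfolding q_def r_def by simp
  have ra: "r < a" unfolding r_def using assms by simp
  have "q \<ge> a" unfolding q_def using assms

    using div_le_mono[of "a*a" n a] by simp
  hence rq: "r \<le> q" using ra by simp
  define f where "f = (\<lambda>g::nat. if g = a then q - r else if g = a+1 then r else 0)"
  have A: "a \<in> {a..a+b}" "a+1 \<in> {a..a+b}" using assms by auto
  have "(\<Sum>g\<in>{a..a+b}. f g * g) = f a * a + (\<Sum>g\<in>{a..a+b}-{a}. f g * g)"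
    using A by (subst sum.remove[of _ a]) auto
  also have "(\<Sum>g\<in>{a..a+b}-{a}. f g * g) = f (a+1) * (a+1) + (\<Sum>g\<in>{a..a+b}-{a}-{a+1}. f g * g)"
    using A by (subst sum.remove[of _ "a+1"]) auto
  also have "(\<Sum>g\<in>{a..a+b}-{a}-{a+1}. f g * g) = 0"
    by (rule sum.neutral) (auto simp: f_def)
  finally have "(\<Sum>g\<in>{a..a+b}. f g * g) = (q - r) * a + r * (a+1)"
    by (simp add: f_def)
  also have "\<dots> = n" using rq n by (simp add: algebra_simps diff_mult_distrib)
  finally show ?thesis unfolding sg_gen_def by auto
qed

lemma one_notin_S:
  fixes a b :: nat
  assumes "1 < a"
  shows "1 \<notin> sg_gen {a..a+b}"
proof
  assume "1 \<in> sg_gen {a..a+b}"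
  then obtain f where f: "1 = (\<Sum>g\<in>{a..a+b}. f g * g)" unfolding sg_gen_def by auto
  have "\<exists>g\<in>{a..a+b}. f g * g \<noteq> 0"
  proof (rule ccontr)
    assume "\<not> ?thesis"
    hence "(\<Sum>g\<in>{a..a+b}. f g * g) = 0" by simp
    with f show False by simp
  qed
  then obtain g where g: "g \<in> {a..a+b}" "f g * g \<noteq> 0" by blast
  have "f g * g \<le> (\<Sum>g\<in>{a..a+b}. f g * g)"
    by (rule member_le_sum) (use g in auto)
  moreover have "f g * g \<ge> g" using g by simp
  ultimately have "g \<le> 1" using f by linarith
  thus False using g assms by auto
qed

theorem lemma4p21:
  fixes a b m r :: nat and M :: "nat set"
  assumes "0 < b" and "b < a"
    and "m \<ge> 2 * conductor (sg_gen {a..a+b})"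
    and "amenable (sg_gen {a..a+b}) m r M"
  shows "amenable (sg_gen {a..a+b}) (m - 1) r ((\<lambda>x. x - 1) ` M)"
proof -
  define S where "S = sg_gen {a..a+b}"
  define c where "c = conductor S"
  have a1: "1 < a" using assms by simp
  have ex: "a*a \<in> S \<and> (\<forall>n. a*a + n \<in> S)"
    unfolding S_def using big_in_S[OF assms(1) a1] by auto
  have cprop: "c \<in> S \<and> (\<forall>n. c + n \<in> S)"
    unfolding c_def conductor_def by (rule LeastI[of _ "a*a"], rule ex)
  have ge: "\<And>x. x \<ge> c \<Longrightarrow> x \<in> S"
    using cprop by (metis le_add_diff_inverse)
  have c1: "c \<ge> 1"
  proof (rule ccontr)
    assume "\<not> c \<ge> 1" hence "c = 0" by simp
    with cprop have "1 \<in> S" by (metis add_0)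
    with one_notin_S[OF a1] show False unfolding S_def by blast
  qed
  have am: "finite M" "card M = r" "M \<subseteq> S" "m \<in> M" "\<forall>x\<in>M. m \<le> x"
    "\<forall>x\<in>M. Dset S x \<inter> {m..} \<subseteq> M"
    using assms(4) unfolding amenable_def S_def by auto
  have mc: "m \<ge> 2*c" using assms(3) unfolding c_def S_def by simp
  have inj: "inj_on (\<lambda>x. x - 1) M"
  proof (rule inj_onI)
    fix x y assume "x \<in> M" "y \<in> M" "x - 1 = y - 1"
    moreover have "x \<ge> 1" "y \<ge> 1" using am(5) mc c1 \<open>x \<in> M\<close> \<open>y \<in> M\<close> by force+
    ultimately show "x = y" by simp
  qed
  have "int (m - 1) \<ge> 2 * int c - 1" using mc c1 by simp
  moreover have "finite ((\<lambda>x. x - 1) ` M)" using am by simp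
  moreover have "card ((\<lambda>x. x - 1) ` M) = r" using card_image[OF inj] am by simp
  moreover have "(\<lambda>x. x - 1) ` M \<subseteq> S"
  proof
    fix y assume "y \<in> (\<lambda>x. x - 1) ` M"
    then obtain x where "x \<in> M" "y = x - 1" by auto
    with am(5) mc c1 have "y \<ge> c" by force
    thus "y \<in> S" by (rule ge)
  qed
  moreover have "m - 1 \<in> (\<lambda>x. x - 1) ` M" using am by auto
  moreover have "\<forall>y\<in>(\<lambda>x. x - 1) ` M. m - 1 \<le> y" using am by auto
  moreover have "\<forall>y\<in>(\<lambda>x. x - 1) ` M. Dset S y \<inter> {m-1..} \<subseteq> (\<lambda>x. x - 1) ` M"
  proof (intro ballI subsetI)
    fix y \<alpha> assume y: "y \<in> (\<lambda>x. x - 1) ` M" and al: "\<alpha> \<in> Dset S y \<inter> {m-1..}"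
    then obtain x where x: "x \<in> M" "y = x - 1" by auto
    have x1: "x \<ge> 1" using am(5) x mc c1 by force
    have d: "\<alpha> \<le> y" "y - \<alpha> \<in> S" "\<alpha> \<ge> m - 1" using al unfolding Dset_def by auto
    have "\<alpha> + 1 \<in> S" using d(3) mc c1 by (intro ge) auto
    moreover have "\<alpha> + 1 \<le> x" "x - (\<alpha>+1) = y - \<alpha>" using d x x1 by auto
    ultimately have "\<alpha> + 1 \<in> Dset S x \<inter> {m..}" using d(2,3) mc c1 unfolding Dset_def by auto
    hence "\<alpha> + 1 \<in> M" using am(6) x by blast
    thus "\<alpha> \<in> (\<lambda>x. x - 1) ` M" by force
  qed
  ultimately show ?thesis unfolding amenable_def S_def[symmetric] c_def[symmetric] by blast
qed

end
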